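(* Let $k\ge 3$, let $\mathcal H$ be a Hilbert space over $\mathbb K\in\{\mathbb R,\mathbb C\}$, and let $\mathbf{x}_1,\ldots,\mathbf{x}_k\in\mathcal H$ be norm one vectors. Then $\pi_s(\mathbf{x}_1\vee\cdots\vee\mathbf{x}_k,\otimes^{k,s}\mathcal H)=1$ if and only if $\dim(\operatorname{span}\{\mathbf{x}_1,\ldots,\mathbf{x}_k\})=1$ in the complex case, and $\dim(\operatorname{span}\{\mathbf{x}_1,\ldots,\mathbf{x}_k\})\in\{1,2\}$ in the real case.
   Context: $\otimes^{k,s}\mathcal H$ denotes the $k$-fold symmetric tensor product of $\mathcal H$, $\mathbf{x}_1\vee\cdots\vee\mathbf{x}_k$ the symmetric tensor (symmetrization of $\mathbf{x}_1\otimes\cdots\otimes\mathbf{x}_k$), and $\pi_s$ the symmetric projective tensor norm. Its dual is the space of continuous $k$-homogeneous polynomials on $\mathcal H$, which on a Hilbert space is isometric to the space $\mathcal L_s(^k\mathcal H)$ of continuous symmetric $k$-linear forms, so that $\pi_s(\mathbf{x}_1\vee\cdots\vee\mathbf{x}_k,\otimes^{k,s}\mathcal H)=\max\{|T(\mathbf{x}_1,\ldots,\mathbf{x}_k)|: T\in\mathcal L_s(^k\mathcal H),\ \|T\|=1\}$, where $\|T\|=\sup\{|T(\mathbf{w}_1,\ldots,\mathbf{w}_k)|:\|\mathbf{w}_i\|\le 1\}$. *)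

theory Defs
  imports "HOL-Analysis.Analysis"
begin

text \<open>Complex Hilbert spaces (HOL-Analysis only provides real inner product spaces):
  a complete real normed space with a complex scalar multiplication extending the real one
  and a complex inner product (linear in the second argument) inducing the norm.\<close>

class complex_hilbert = real_normed_vector + complete_space +
  fixes scaleC :: "complex \<Rightarrow> 'a \<Rightarrow> 'a"
    and cinner :: "'a \<Rightarrow> 'a \<Rightarrow> complex"
  assumes scaleC_add_right: "scaleC a (x + y) = scaleC a x + scaleC a y"
    and scaleC_add_left: "scaleC (a + b) x = scaleC a x + scaleC b x"
    and scaleC_scaleC: "scaleC a (scaleC b x) = scaleC (a * b) x"
    and scaleC_one: "scaleC 1 x = x"
    and scaleR_scaleC: "scaleR r x = scaleC (of_real r) x"
    and cinner_conj_commute: "cinner x y = cnj (cinner y x)"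
    and cinner_add_right: "cinner x (y + z) = cinner x y + cinner x z"
    and cinner_scaleC_right: "cinner x (scaleC a y) = a * cinner x y"
    and cinner_ge_zero: "Im (cinner x x) = 0 \<and> Re (cinner x x) \<ge> 0"
    and cinner_eq_zero_iff: "cinner x x = 0 \<longleftrightarrow> x = 0"
    and norm_eq_sqrt_cinner: "norm x = sqrt (Re (cinner x x))"

text \<open>k-linear forms on a vector space with scalar multiplication sc, represented as
  functions of the argument tuple (w 0, ..., w (k-1)).\<close>

definition multilinear_form ::
  "('f::field \<Rightarrow> 'a::ab_group_add \<Rightarrow> 'a) \<Rightarrow> nat \<Rightarrow> ((nat \<Rightarrow> 'a) \<Rightarrow> 'f) \<Rightarrow> bool" where
  "multilinear_form sc k T \<longleftrightarrow>
     (\<forall>w w'. (\<forall>i<k. w i = w' i) \<longrightarrow> T w = T w') \<and>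
     (\<forall>i<k. \<forall>w u v a b. T (w(i := sc a u + sc b v)) = a * T (w(i := u)) + b * T (w(i := v)))"

definition symmetric_form :: "nat \<Rightarrow> ((nat \<Rightarrow> 'a) \<Rightarrow> 'f) \<Rightarrow> bool" where
  "symmetric_form k T \<longleftrightarrow> (\<forall>p w. p permutes {..<k} \<longrightarrow> T (w \<circ> p) = T w)"

definition form_norm :: "nat \<Rightarrow> ((nat \<Rightarrow> 'a::real_normed_vector) \<Rightarrow> 'f::real_normed_field) \<Rightarrow> real" where
  "form_norm k T = Sup {norm (T w) | w. \<forall>i<k. norm (w i) \<le> 1}"

definition bounded_form :: "nat \<Rightarrow> ((nat \<Rightarrow> 'a::real_normed_vector) \<Rightarrow> 'f::real_normed_field) \<Rightarrow> bool" where
  "bounded_form k T \<longleftrightarrow> bdd_above {norm (T w) | w. \<forall>i<k. norm (w i) \<le> 1}"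

text \<open>Symmetric projective tensor norm of x_1 v ... v x_k (arguments x 0, ..., x (k-1)),
  computed by duality with continuous symmetric k-linear forms of norm one.\<close>

definition pi_s ::
  "('f::real_normed_field \<Rightarrow> 'a::real_normed_vector \<Rightarrow> 'a) \<Rightarrow> nat \<Rightarrow> (nat \<Rightarrow> 'a) \<Rightarrow> real" where
  "pi_s sc k x = Sup {norm (T x) | T. multilinear_form sc k T \<and> symmetric_form k T \<and>
                       bounded_form k T \<and> form_norm k T = 1}"

end

theory Submission
  imports Defs
begin

section \<open>Complex Hilbert basics\<close>

lemma scaleC_0_left [simp]: "scaleC 0 (x::'a::complex_hilbert) = 0"
  using scaleR_scaleC[of 0 x] by simp

lemma scaleC_of_real: "scaleC (complex_of_real r) (x::'a::complex_hilbert) = r *\<^sub>R x"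
  using scaleR_scaleC[of r x] by simp

lemma module_scaleC: "module (scaleC :: complex \<Rightarrow> 'a::complex_hilbert \<Rightarrow> 'a)"
  apply unfold_locales
  apply (rule scaleC_add_right)
  apply (rule scaleC_add_left)
  apply (rule scaleC_scaleC)
  apply (rule scaleC_one)
  done

lemma vs_scaleC: "vector_space (scaleC :: complex \<Rightarrow> 'a::complex_hilbert \<Rightarrow> 'a)"
  apply unfold_locales
  apply (rule scaleC_add_right)
  apply (rule scaleC_add_left)
  apply (rule scaleC_scaleC)
  apply (rule scaleC_one)
  done

interpretation cm: module "scaleC :: complex \<Rightarrow> 'a::complex_hilbert \<Rightarrow> 'a"
  by (rule module_scaleC)

interpretation cvs: vector_space "scaleC :: complex \<Rightarrow> 'a::complex_hilbert \<Rightarrow> 'a"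
  by (rule vs_scaleC)

lemma cinner_add_left: "cinner (x + y) (z::'a::complex_hilbert) = cinner x z + cinner y z"
  by (subst (1 2 3) cinner_conj_commute) (simp add: cinner_add_right)

lemma cinner_scaleC_left: "cinner (scaleC a x) (y::'a::complex_hilbert) = cnj a * cinner x y"
  by (subst (1 2) cinner_conj_commute) (simp add: cinner_scaleC_right)

lemma cinner_zero_right [simp]: "cinner x (0::'a::complex_hilbert) = 0"
  using cinner_add_right[of x 0 0] by simp

lemma cinner_zero_left [simp]: "cinner 0 (x::'a::complex_hilbert) = 0"
  using cinner_add_left[of 0 0 x] by simp

lemma cinner_minus_right: "cinner x (- y) = - cinner x (y::'a::complex_hilbert)"
  using cinner_add_right[of x y "-y"] by (simp add: add_eq_0_iff)

lemma cinner_minus_left: "cinner (- x) y = - cinner x (y::'a::complex_hilbert)"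
  using cinner_add_left[of x "-x" y] by (simp add: add_eq_0_iff)

lemma cinner_diff_right: "cinner x (y - z) = cinner x y - cinner x (z::'a::complex_hilbert)"
  by (simp only: diff_conv_add_uminus cinner_add_right cinner_minus_right)

lemma cinner_diff_left: "cinner (y - z) x = cinner y x - cinner z (x::'a::complex_hilbert)"
  by (simp only: diff_conv_add_uminus cinner_add_left cinner_minus_left)

lemma cinner_self: "cinner x (x::'a::complex_hilbert) = complex_of_real ((norm x)^2)"
proof -
  have "Im (cinner x x) = 0" "Re (cinner x x) \<ge> 0" using cinner_ge_zero[of x] by auto
  moreover have "(norm x)^2 = Re (cinner x x)" using norm_eq_sqrt_cinner[of x] calculation by simp
  ultimately show ?thesis by (simp add: complex_eq_iff)
qed

lemma cinner_scaleR_left: "cinner (r *\<^sub>R x) (y::'a::complex_hilbert) = complex_of_real r * cinner x y"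
  by (simp only: scaleR_scaleC cinner_scaleC_left complex_cnj_complex_of_real)

lemma cinner_scaleR_right: "cinner y (r *\<^sub>R x) = complex_of_real r * cinner y (x::'a::complex_hilbert)"
  by (simp only: scaleR_scaleC cinner_scaleC_right)

lemmas cinner_simps = cinner_add_left cinner_add_right cinner_diff_left cinner_diff_right
  cinner_scaleC_left cinner_scaleC_right cinner_minus_left cinner_minus_right
  cinner_scaleR_left cinner_scaleR_right

lemma norm_sq_cinner: "(norm x)^2 = Re (cinner x (x::'a::complex_hilbert))"
  by (simp add: cinner_self)

lemma norm_scaleC: "norm (scaleC a (x::'a::complex_hilbert)) = cmod a * norm x"
proof -
  have "cinner (scaleC a x) (scaleC a x) = (a * cnj a) * cinner x x"
    by (simp add: cinner_scaleC_left cinner_scaleC_right mult.commute mult.left_commute)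
  also have "\<dots> = complex_of_real ((cmod a)^2) * complex_of_real ((norm x)^2)"
    by (simp only: complex_norm_square cinner_self)
  also have "\<dots> = complex_of_real ((cmod a * norm x)^2)"
    by (simp add: power_mult_distrib)
  finally have "(norm (scaleC a x))^2 = (cmod a * norm x)^2"
    by (simp add: norm_sq_cinner)
  thus ?thesis
    by (simp add: power2_eq_iff_nonneg)
qed

lemma scaleC_eq_0_iff: "scaleC a (x::'a::complex_hilbert) = 0 \<longleftrightarrow> a = 0 \<or> x = 0"
proof -
  have "scaleC a x = 0 \<longleftrightarrow> norm (scaleC a x) = 0" by simp
  also have "\<dots> \<longleftrightarrow> a = 0 \<or> x = 0" by (simp add: norm_scaleC)
  finally show ?thesis .
qed

lemma cinner_eq_zero_vec: "(\<And>v. cinner u v = cinner w (v::'a::complex_hilbert)) \<Longrightarrow> u = w"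
proof -
  assume h: "\<And>v. cinner u v = cinner w v"
  have "cinner (u - w) (u - w) = cinner u (u-w) - cinner w (u-w)" by (rule cinner_diff_left)
  also have "\<dots> = 0" using h[of "u-w"] by simp
  finally have "u - w = 0" using cinner_eq_zero_iff by blast
  thus ?thesis by simp
qed

lemma cauchy_schwarz_c: "cmod (cinner b (w::'a::complex_hilbert)) \<le> norm b * norm w"
proof (cases "b = 0")
  case True thus ?thesis by simp
next
  case False
  define c where "c = cinner b w / complex_of_real ((norm b)^2)"
  define w' where "w' = w - scaleC c b"
  have nb: "norm b > 0" using False by simp
  have o: "cinner b w' = 0"
    using nb by (simp add: w'_def cinner_simps cinner_self c_def)
  have "(norm w)^2 = Re (cinner (w' + scaleC c b) (w' + scaleC c b))"
    by (simp add: w'_def norm_sq_cinner)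
  also have "\<dots> = (norm w')^2 + (cmod c)^2 * (norm b)^2"
  proof -
    have o2: "cinner w' b = 0" using o cinner_conj_commute[of w' b] by simp
    have "cinner (w' + scaleC c b) (w' + scaleC c b) = cinner w' w' + cnj c * c * cinner b b"
      by (simp add: cinner_add_left cinner_add_right cinner_scaleC_left cinner_scaleC_right o o2)
    also have "\<dots> = complex_of_real ((norm w')^2 + (cmod c)^2 * (norm b)^2)"
      by (simp only: cinner_self mult.commute[of "cnj c" c] complex_norm_square[symmetric]) simp
    finally show ?thesis by simp
  qed
  finally have "(cmod c)^2 * (norm b)^2 \<le> (norm w)^2" by simp
  hence "(cmod c * norm b)^2 \<le> (norm w)^2" by (simp add: power_mult_distrib)
  hence "cmod c * norm b \<le> norm w" by (simp add: power2_le_iff_abs_le)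
  have "cmod c * (norm b)^2 = cmod (cinner b w)"
    using nb by (simp add: c_def norm_divide norm_power)
  have "cmod (cinner b w) = (cmod c * norm b) * norm b"
    using \<open>cmod c * (norm b)^2 = cmod (cinner b w)\<close> by (simp add: power2_eq_square mult.assoc)
  also have "\<dots> \<le> norm w * norm b"
    by (rule mult_right_mono[OF \<open>cmod c * norm b \<le> norm w\<close>]) simp
  finally show ?thesis by (simp add: mult.commute)
qed


lemma arith_contra:
  fixes c B A s :: real
  assumes c: "c > 0" and B: "B \<ge> 0" and A: "A > 0" and s: "s = 1 / (c * (B + 1))"
    and h: "(c + s * A)^2 \<le> c^2 * (1 + s^2 * A * B)"
  shows False
proof -
  have "c * (B + 1) > 0" using c B by simp
  hence cs: "c * s * (B + 1) = 1" using s by (simp add: field_simps)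
  have sp: "s > 0" using c B s by simp
  define q where "q = c * s * A"
  have qp: "q > 0" using c sp A by (simp add: q_def)
  have "c^2 + 2 * q + s^2 * A^2 \<le> c^2 + q * (c * s * B)"
    using h by (simp add: q_def power2_eq_square algebra_simps)
  moreover have "c * s * B < 1" using cs sp c B by (simp add: algebra_simps) (smt (verit) mult_pos_pos)
  hence "q * (c * s * B) < q" using qp by simp
  moreover have "s^2 * A^2 \<ge> 0" by simp
  ultimately show False using qp by linarith
qed

lemma eq_real:
  fixes f :: "'a::real_inner \<Rightarrow> real"
  assumes add: "\<And>u v. f (u + v) = f u + f v" and scl: "\<And>r u. f (r *\<^sub>R u) = r * f u"
    and bnd: "\<And>u. \<bar>f u\<bar> \<le> c * norm u" and y: "norm y = 1" and fy: "f y = c"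
  shows "f u = c * inner y u"
proof -
  have c0: "c \<ge> 0" using bnd[of y] y fy by simp
  have yy: "inner y y = 1" using y by (simp add: dot_square_norm)
  define v where "v = u - inner y u *\<^sub>R y"
  have yv: "inner y v = 0" by (simp add: v_def inner_diff_right yy)
  have fdiff: "f (a - b) = f a - f b" for a b
    using add[of "a - b" b] by simp
  have fv: "f v = f u - inner y u * c" by (simp add: v_def fdiff scl fy)
  have "f v = 0"
  proof (cases "c = 0")
    case True
    thus ?thesis using bnd[of v] by simp
  next
    case False
    hence cp: "c > 0" using c0 by simp
    show ?thesis
    proof (rule ccontr)
      assume a0: "f v \<noteq> 0"
      define B where "B = (norm v)^2"
      define A where "A = (f v)^2"
      define s where "s = 1 / (c * (B + 1))"
      have B0: "B \<ge> 0" by (simp add: B_def)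
      have A0: "A > 0" using a0 by (simp add: A_def)
      have s0: "s > 0" using cp B0 by (simp add: s_def)
      define t where "t = s * f v"
      have "f (y + t *\<^sub>R v) = c + s * A"
        by (simp add: add scl fy t_def A_def power2_eq_square)
      moreover have "(norm (y + t *\<^sub>R v))^2 = 1 + s^2 * A * B"
      proof -
        have "(norm (y + t *\<^sub>R v))^2 = inner (y + t *\<^sub>R v) (y + t *\<^sub>R v)"
          by (simp add: dot_square_norm)
        also have "\<dots> = inner y y + 2 * t * inner y v + t^2 * inner v v"
          by (simp add: inner_add_left inner_add_right inner_commute power2_eq_square algebra_simps)
        also have "\<dots> = 1 + s^2 * A * B"
          by (simp add: yy yv t_def A_def B_def power_mult_distrib flip: dot_square_norm)
        finally show ?thesis .
      qed
      moreover have "\<bar>f (y + t *\<^sub>R v)\<bar> \<le> c * norm (y + t *\<^sub>R v)" by (rule bnd)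
      ultimately have h1: "c + s * A \<le> c * norm (y + t *\<^sub>R v)" by simp
      have "c + s * A \<ge> 0" using cp s0 A0 by simp
      hence "(c + s * A)^2 \<le> (c * norm (y + t *\<^sub>R v))^2"
        using h1 by (simp add: power_mono)
      also have "\<dots> = c^2 * (1 + s^2 * A * B)"
        by (simp add: power_mult_distrib \<open>(norm (y + t *\<^sub>R v))^2 = 1 + s^2 * A * B\<close>)
      finally show False using arith_contra[OF cp B0 A0 s_def] by blast
    qed
  qed
  thus ?thesis using fv by (simp add: mult.commute)
qed

locale rtri =
  fixes S :: "'a::real_inner \<Rightarrow> 'a \<Rightarrow> 'a \<Rightarrow> real"
  assumes add3: "S a b (u + v) = S a b u + S a b v"
    and scl3: "S a b (r *\<^sub>R u) = r * S a b u"
    and sym12: "S a b c = S b a c"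
    and sym23: "S a b c = S a c b"
    and bnd: "\<bar>S a b c\<bar> \<le> norm a * norm b * norm c"
begin

lemma add1: "S (u + v) b c = S u b c + S v b c"
  by (metis add3 sym12 sym23)

lemma add2: "S a (u + v) c = S a u c + S a v c"
  by (metis add3 sym23)

lemma scl1: "S (r *\<^sub>R u) b c = r * S u b c"
  by (metis scl3 sym12 sym23)

lemma scl2: "S a (r *\<^sub>R u) c = r * S a u c"
  by (metis scl3 sym23)

lemma diff1: "S (u - v) b c = S u b c - S v b c"
  using add1[of "u - v" v b c] by simp

lemma diff2: "S a (u - v) c = S a u c - S a v c"
  using add2[of a "u - v" v c] by simp

lemma Fl:
  assumes n1: "norm y1 = 1" and n2: "norm y2 = 1" and n3: "norm y3 = 1" and h: "S y1 y2 y3 = 1"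
  shows "S y1 y2 v = inner y3 v"
  using eq_real[of "S y1 y2" 1 y3 v] add3 scl3 bnd[of y1 y2] n1 n2 n3 h by simp

lemma P:
  assumes n1: "norm y1 = 1" and n2: "norm y2 = 1" and n3: "norm y3 = 1" and h: "S y1 y2 y3 = 1"
  shows "S y1 y1 v + S y2 y2 v = 2 * inner y1 y2 * inner y3 v"
proof -
  define w where "w = y1 + y2"
  define w' where "w' = y1 - y2"
  have Ew: "S w w u = S y1 y1 u + 2 * S y1 y2 u + S y2 y2 u" for u
    by (simp add: w_def add1 add2 sym12[of y2 y1])
  have Ew': "S w' w' u = S y1 y1 u - 2 * S y1 y2 u + S y2 y2 u" for u
    by (simp add: w'_def diff1 diff2 sym12[of y2 y1])
  have i11: "inner y1 y1 = 1" using n1 by (simp add: dot_square_norm)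
  have i22: "inner y2 y2 = 1" using n2 by (simp add: dot_square_norm)
  have nw: "(norm w)^2 = 2 + 2 * inner y1 y2"
    by (simp add: w_def flip: dot_square_norm) (simp add: inner_add_left inner_add_right inner_commute i11 i22)
  have nw': "(norm w')^2 = 2 - 2 * inner y1 y2"
    by (simp add: w'_def flip: dot_square_norm) (simp add: inner_diff_left inner_diff_right inner_commute i11 i22)
  have b1: "\<bar>S w w y3\<bar> \<le> (norm w)^2" using bnd[of w w y3] n3 by (simp add: power2_eq_square)
  have b2: "\<bar>S w' w' y3\<bar> \<le> (norm w')^2" using bnd[of w' w' y3] n3 by (simp add: power2_eq_square)
  have d: "S w w y3 - S w' w' y3 = 4" using Ew[of y3] Ew'[of y3] h by simp
  have e1: "S w w y3 = (norm w)^2" using b1 b2 d nw nw' by linarith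
  have e2: "- S w' w' y3 = (norm w')^2" using b1 b2 d nw nw' by linarith
  have F: "S w w u = (norm w)^2 * inner y3 u" for u
    by (rule eq_real[of "S w w"]) (auto simp: add3 scl3 n3 e1 intro: order_trans[OF bnd] simp: power2_eq_square)
  have G: "- S w' w' u = (norm w')^2 * inner y3 u" for u
    by (rule eq_real[of "\<lambda>u. - S w' w' u"]) (auto simp: add3 scl3 n3 e2 intro: order_trans[OF bnd] simp: power2_eq_square)
  show ?thesis using F[of v] G[of v] Ew[of v] Ew'[of v] nw nw' by (simp add: algebra_simps)
qed

lemma R:
  assumes n1: "norm y1 = 1" and n2: "norm y2 = 1" and n3: "norm y3 = 1" and h: "S y1 y2 y3 = 1"
  shows "S y1 y1 v = inner y1 y2 * inner y3 v + inner y1 y3 * inner y2 v - inner y2 y3 * inner y1 v"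
proof -
  have h2: "S y1 y3 y2 = 1" using h sym23 by metis
  have h3: "S y2 y3 y1 = 1" using h sym12 sym23 by metis
  note a = P[OF n1 n2 n3 h, of v]
  note b = P[OF n1 n3 n2 h2, of v]
  note c = P[OF n2 n3 n1 h3, of v]
  show ?thesis using a b c by (simp add: algebra_simps)
qed

lemma core:
  assumes n1: "norm x1 = 1" and n2: "norm x2 = 1" and n3: "norm x3 = 1" and h: "S x1 x2 x3 = 1"
    and ind: "x1 \<notin> span {x2, x3}" and d23: "x2 \<noteq> x3" and s23: "x2 + x3 \<noteq> 0"
  shows False
proof -
  have h2: "S x1 x3 x2 = 1" using h sym23 by metis
  have F12: "S x1 x2 v = inner x3 v" for v using Fl[OF n1 n2 n3 h] .
  have F13: "S x1 x3 v = inner x2 v" for v using Fl[OF n1 n3 n2 h2] .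
  define r where "r = norm (x2 + x3)"
  have rp: "r > 0" using s23 by (simp add: r_def)
  define z where "z = (1 / r) *\<^sub>R (x2 + x3)"
  have nz: "norm z = 1" using rp by (simp add: z_def r_def)
  have Sz: "S x1 z v = inner z v" for v
    by (simp add: z_def scl2 add2 F12 F13 inner_add_left algebra_simps)
  have hz: "S x1 z z = 1" using Sz[of z] nz by (simp add: dot_square_norm)
  have izz: "inner z z = 1" using nz by (simp add: dot_square_norm)
  have Ra: "S x1 x1 v = inner x1 x2 * inner x3 v + inner x1 x3 * inner x2 v - inner x2 x3 * inner x1 v" for v
    using R[OF n1 n2 n3 h] .
  have Rb: "S x1 x1 v = inner x1 z * inner z v + inner x1 z * inner z v - inner z z * inner x1 v" for v
    using R[OF n1 nz nz hz] .
  define D where "D = (2 * inner x1 z) *\<^sub>R z - x1 - inner x1 x2 *\<^sub>R x3 - inner x1 x3 *\<^sub>R x2 + inner x2 x3 *\<^sub>R x1"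
  have "inner D v = 0" for v
    using Ra[of v] Rb[of v] izz by (simp add: D_def inner_diff_left inner_add_left algebra_simps)
  hence "D = 0" using inner_eq_zero_iff by blast
  hence E: "(1 - inner x2 x3) *\<^sub>R x1 = (2 * inner x1 z) *\<^sub>R z - inner x1 x2 *\<^sub>R x3 - inner x1 x3 *\<^sub>R x2"
    by (simp add: D_def algebra_simps)
  have zs: "z \<in> span {x2, x3}" unfolding z_def
    by (intro span_mul span_add span_base) auto
  have rs: "(2 * inner x1 z) *\<^sub>R z - inner x1 x2 *\<^sub>R x3 - inner x1 x3 *\<^sub>R x2 \<in> span {x2, x3}"
    by (intro span_diff span_mul zs span_base) auto
  have g: "inner x2 x3 = 1"
  proof (rule ccontr)
    assume "inner x2 x3 \<noteq> 1"
    hence "x1 = (1 / (1 - inner x2 x3)) *\<^sub>R ((1 - inner x2 x3) *\<^sub>R x1)" by simp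
    also have "\<dots> \<in> span {x2, x3}" unfolding E by (intro span_mul rs)
    finally show False using ind by simp
  qed
  have i22: "inner x2 x2 = 1" using n2 by (simp add: dot_square_norm)
  have i33: "inner x3 x3 = 1" using n3 by (simp add: dot_square_norm)
  have "inner (x2 - x3) (x2 - x3) = 0"
    by (simp add: inner_diff_left inner_diff_right inner_commute[of x3 x2] g i22 i33)
  thus False using d23 by simp
qed

end


lemma extreme:
  fixes u1 u2 :: complex
  assumes d: "u1 - u2 = 4" and b1: "cmod u1 \<le> A1" and b2: "cmod u2 \<le> A2" and s: "A1 + A2 = 4"
  shows "u1 = complex_of_real A1" "u2 = - complex_of_real A2"
proof -
  have r1: "Re u1 \<le> A1" using b1 complex_Re_le_cmod order_trans by blast
  have r2: "- Re u2 \<le> A2" using b2 abs_Re_le_cmod[of u2] by linarith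
  have dr: "Re u1 - Re u2 = 4" "Im u1 = Im u2" using d by (auto simp: complex_eq_iff)
  have e1: "Re u1 = A1" and e2: "Re u2 = - A2" using r1 r2 dr s by linarith+
  have "(cmod u1)^2 \<le> A1^2"
    using b1 by (metis norm_ge_zero power_mono)
  hence "(Re u1)^2 + (Im u1)^2 \<le> A1^2" by (simp add: cmod_power2)
  hence "Im u1 = 0" using e1 by simp
  thus "u1 = complex_of_real A1" "u2 = - complex_of_real A2" using e1 e2 dr
    by (auto simp: complex_eq_iff)
qed

lemma eq_cplx:
  fixes f :: "'a::complex_hilbert \<Rightarrow> complex"
  assumes add: "\<And>u v. f (u + v) = f u + f v" and scl: "\<And>r u. f (scaleC r u) = r * f u"
    and bnd: "\<And>u. cmod (f u) \<le> c * norm u" and y: "norm y = 1" and fy: "f y = complex_of_real c"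
  shows "f u = complex_of_real c * cinner y u"
proof -
  have c0: "c \<ge> 0" using bnd[of y] y fy by simp
  have yy: "cinner y y = 1" using y by (simp add: cinner_self)
  define v where "v = u - scaleC (cinner y u) y"
  have yv: "cinner y v = 0" by (simp add: v_def cinner_diff_right cinner_scaleC_right yy)
  have vy: "cinner v y = 0" using yv cinner_conj_commute[of v y] by simp
  have fdiff: "f (a - b) = f a - f b" for a b
    using add[of "a - b" b] by simp
  have fv: "f v = f u - cinner y u * complex_of_real c" by (simp add: v_def fdiff scl fy)
  have "f v = 0"
  proof (cases "c = 0")
    case True
    thus ?thesis using bnd[of v] by simp
  next
    case False
    hence cp: "c > 0" using c0 by simp
    show ?thesis
    proof (rule ccontr)
      assume a0: "f v \<noteq> 0"
      define B where "B = (norm v)^2"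
      define A where "A = (cmod (f v))^2"
      define s where "s = 1 / (c * (B + 1))"
      have B0: "B \<ge> 0" by (simp add: B_def)
      have A0: "A > 0" using a0 by (simp add: A_def)
      have s0: "s > 0" using cp B0 by (simp add: s_def)
      define t where "t = complex_of_real s * cnj (f v)"
      have ca: "cnj (f v) * f v = complex_of_real A"
        unfolding A_def complex_norm_square by (rule mult.commute)
      have "f (y + scaleC t v) = complex_of_real c + t * f v"
        by (simp add: add scl fy)
      also have "\<dots> = complex_of_real (c + s * A)"
        by (simp add: t_def mult.assoc ca)
      finally have fe: "f (y + scaleC t v) = complex_of_real (c + s * A)" .
      have ne: "(norm (y + scaleC t v))^2 = 1 + s^2 * A * B"
      proof -
        have "cinner (y + scaleC t v) (y + scaleC t v) = cinner y y + t * cinner y v + cnj t * cinner v y + (t * cnj t) * cinner v v"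
          by (simp add: cinner_add_left cinner_add_right cinner_scaleC_left cinner_scaleC_right algebra_simps)
        also have "\<dots> = 1 + complex_of_real ((cmod t)^2) * complex_of_real B"
          by (simp only: yy yv vy complex_norm_square[symmetric] cinner_self[of v] B_def) simp
        also have "(cmod t)^2 = s^2 * A"
          using s0 by (simp add: t_def A_def norm_mult power_mult_distrib)
        finally have "cinner (y + scaleC t v) (y + scaleC t v) = complex_of_real (1 + s^2 * A * B)"
          by simp
        thus ?thesis by (simp add: norm_sq_cinner)
      qed
      have "cmod (f (y + scaleC t v)) \<le> c * norm (y + scaleC t v)" by (rule bnd)
      moreover have "cmod (f (y + scaleC t v)) = c + s * A"
        unfolding fe norm_of_real using cp s0 A0 by simp
      ultimately have h1: "c + s * A \<le> c * norm (y + scaleC t v)" by simp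
      have "c + s * A \<ge> 0" using cp s0 A0 by simp
      hence "(c + s * A)^2 \<le> (c * norm (y + scaleC t v))^2"
        using h1 by (simp add: power_mono)
      also have "\<dots> = c^2 * (1 + s^2 * A * B)"
        by (simp add: power_mult_distrib ne)
      finally show False using arith_contra[OF cp B0 A0 s_def] by blast
    qed
  qed
  thus ?thesis using fv by (simp add: mult.commute)
qed

locale ctri =
  fixes S :: "'a::complex_hilbert \<Rightarrow> 'a \<Rightarrow> 'a \<Rightarrow> complex"
  assumes add3: "S a b (u + v) = S a b u + S a b v"
    and scl3: "S a b (scaleC r u) = r * S a b u"
    and sym12: "S a b c = S b a c"
    and sym23: "S a b c = S a c b"
    and bnd: "cmod (S a b c) \<le> norm a * norm b * norm c"
begin

lemma add1: "S (u + v) b c = S u b c + S v b c"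
  by (metis add3 sym12 sym23)

lemma add2: "S a (u + v) c = S a u c + S a v c"
  by (metis add3 sym23)

lemma scl1: "S (scaleC r u) b c = r * S u b c"
  by (metis scl3 sym12 sym23)

lemma scl2: "S a (scaleC r u) c = r * S a u c"
  by (metis scl3 sym23)

lemma diff1: "S (u - v) b c = S u b c - S v b c"
  using add1[of "u - v" v b c] by simp

lemma diff2: "S a (u - v) c = S a u c - S a v c"
  using add2[of a "u - v" v c] by simp

lemma Fl:
  assumes n1: "norm y1 = 1" and n2: "norm y2 = 1" and n3: "norm y3 = 1" and h: "S y1 y2 y3 = 1"
  shows "S y1 y2 v = cinner y3 v"
  using eq_cplx[of "S y1 y2" 1 y3 v] add3 scl3 bnd[of y1 y2] n1 n2 n3 h by simp

lemma EQ:
  assumes lin: "\<And>u v. f (u + v) = f u + f v" "\<And>r u. f (scaleC r u) = r * f u"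
    and b: "\<And>u. cmod (f u) \<le> (norm w)^2 * norm u"
    and n3: "norm y3 = 1" and e: "f y3 = complex_of_real ((norm w)^2)"
  shows "f u = complex_of_real ((norm w)^2) * cinner y3 u"
  by (rule eq_cplx[OF lin b n3 e])

lemma C:
  assumes n1: "norm y1 = 1" and n2: "norm y2 = 1" and n3: "norm y3 = 1" and h: "S y1 y2 y3 = 1"
  shows "S y1 y1 v = cnj (cinner y1 y2) * cinner y3 v"
proof -
  define g where "g = cinner y1 y2"
  have g21: "cinner y2 y1 = cnj g" unfolding g_def by (rule cinner_conj_commute)
  have c11: "cinner y1 y1 = 1" using n1 by (simp add: cinner_self)
  have c22: "cinner y2 y2 = 1" using n2 by (simp add: cinner_self)
  define w where "w = y1 + y2"
  define w' where "w' = y1 - y2"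
  define p where "p = y1 + scaleC \<i> y2"
  define q where "q = y1 - scaleC \<i> y2"
  have Ew: "S w w u = S y1 y1 u + 2 * S y1 y2 u + S y2 y2 u" for u
    by (simp add: w_def add1 add2 sym12[of y2 y1])
  have Ew': "S w' w' u = S y1 y1 u - 2 * S y1 y2 u + S y2 y2 u" for u
    by (simp add: w'_def diff1 diff2 sym12[of y2 y1])
  have Ep: "S p p u = S y1 y1 u + 2 * \<i> * S y1 y2 u - S y2 y2 u" for u
    by (simp add: p_def add1 add2 scl1 scl2 sym12[of y2 y1] algebra_simps)
  have Eq: "S q q u = S y1 y1 u - 2 * \<i> * S y1 y2 u - S y2 y2 u" for u
    by (simp add: q_def diff1 diff2 scl1 scl2 sym12[of y2 y1] algebra_simps)
  have nw: "(norm w)^2 = 2 + 2 * Re g"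
    unfolding norm_sq_cinner w_def by (simp add: cinner_simps c11 c22 g21 flip: g_def)
  have nw': "(norm w')^2 = 2 - 2 * Re g"
    unfolding norm_sq_cinner w'_def by (simp add: cinner_simps c11 c22 g21 flip: g_def)
  have np: "(norm p)^2 = 2 - 2 * Im g"
    unfolding norm_sq_cinner p_def by (simp add: cinner_simps c11 c22 g21 flip: g_def)
  have nq: "(norm q)^2 = 2 + 2 * Im g"
    unfolding norm_sq_cinner q_def by (simp add: cinner_simps c11 c22 g21 flip: g_def)
  have bb: "cmod (S a a y3) \<le> (norm a)^2" for a
    using bnd[of a a y3] n3 by (simp add: power2_eq_square)
  have bu: "cmod (S a a u) \<le> (norm a)^2 * norm u" for a u
    using bnd[of a a u] by (simp add: power2_eq_square)
  have x1: "S w w y3 = complex_of_real ((norm w)^2)" "S w' w' y3 = - complex_of_real ((norm w')^2)"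
  proof -
    have d: "S w w y3 - S w' w' y3 = 4" using Ew[of y3] Ew'[of y3] h by simp
    have s4: "(norm w)^2 + (norm w')^2 = 4" using nw nw' by simp
    show "S w w y3 = complex_of_real ((norm w)^2)" "S w' w' y3 = - complex_of_real ((norm w')^2)"
      using extreme[OF d bb[of w] bb[of w'] s4] by auto
  qed
  have x2: "- \<i> * S p p y3 = complex_of_real ((norm p)^2)" "- \<i> * S q q y3 = - complex_of_real ((norm q)^2)"
  proof -
    have dd: "S p p y3 - S q q y3 = 4 * \<i>" using Ep[of y3] Eq[of y3] h by simp
    have "- \<i> * S p p y3 - (- \<i> * S q q y3) = - \<i> * (S p p y3 - S q q y3)"
      by (simp add: algebra_simps)
    also have "\<dots> = 4" unfolding dd by (simp add: complex_eq_iff)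
    finally have "- \<i> * S p p y3 - (- \<i> * S q q y3) = 4" .
    moreover have "cmod (- \<i> * S p p y3) \<le> (norm p)^2" "cmod (- \<i> * S q q y3) \<le> (norm q)^2"
      using bb[of p] bb[of q] by (simp_all add: norm_mult)
    moreover have s4: "(norm p)^2 + (norm q)^2 = 4" using np nq by simp
    ultimately show "- \<i> * S p p y3 = complex_of_real ((norm p)^2)" "- \<i> * S q q y3 = - complex_of_real ((norm q)^2)"
      using extreme by blast+
  qed
  have Fw: "S w w u = complex_of_real ((norm w)^2) * cinner y3 u" for u
    by (rule EQ[OF add3 scl3 bu n3 x1(1)])
  have Fw': "- S w' w' u = complex_of_real ((norm w')^2) * cinner y3 u" for u
    by (rule EQ[of "\<lambda>u. - S w' w' u"]) (auto simp: add3 scl3 n3 x1(2) bu)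
  have Fp: "- \<i> * S p p u = complex_of_real ((norm p)^2) * cinner y3 u" for u
    apply (rule EQ[of "\<lambda>u. - \<i> * S p p u"])
    apply (simp add: add3 algebra_simps)
    apply (simp add: scl3 algebra_simps)
    apply (simp add: norm_mult bu)
    apply (rule n3)
    using x2(1) by simp
  have Fq: "\<i> * S q q u = complex_of_real ((norm q)^2) * cinner y3 u" for u
    apply (rule EQ[of "\<lambda>u. \<i> * S q q u"])
    apply (simp add: add3 algebra_simps)
    apply (simp add: scl3 algebra_simps)
    apply (simp add: norm_mult bu)
    apply (rule n3)
    using x2(2) by (simp add: minus_equation_iff[of "\<i> * S q q y3"])
  have sum: "4 * S y1 y1 v = S w w v + S w' w' v + S p p v + S q q v"
    by (simp add: Ew Ew' Ep Eq algebra_simps)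
  have Spp: "S p p v = \<i> * complex_of_real ((norm p)^2) * cinner y3 v"
  proof -
    have "S p p v = \<i> * (- \<i> * S p p v)" by (simp add: complex_i_mult_minus)
    also have "\<dots> = \<i> * (complex_of_real ((norm p)^2) * cinner y3 v)" by (simp only: Fp)
    finally show ?thesis by (simp add: mult.assoc)
  qed
  have Sqq: "S q q v = - \<i> * complex_of_real ((norm q)^2) * cinner y3 v"
  proof -
    have "S q q v = - \<i> * (\<i> * S q q v)" by (simp add: complex_i_mult_minus)
    also have "\<dots> = - \<i> * (complex_of_real ((norm q)^2) * cinner y3 v)" by (simp only: Fq)
    finally show ?thesis by (simp add: mult.assoc)
  qed
  have "4 * S y1 y1 v = (complex_of_real ((norm w)^2) - complex_of_real ((norm w')^2)
        + \<i> * complex_of_real ((norm p)^2) - \<i> * complex_of_real ((norm q)^2)) * cinner y3 v"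
  proof -
    have Sw': "S w' w' v = - (complex_of_real ((norm w')^2) * cinner y3 v)"
      using Fw'[of v] by (metis minus_minus)
    show ?thesis unfolding sum Fw[of v] Sw' Spp Sqq by (simp add: algebra_simps)
  qed
  also have "complex_of_real ((norm w)^2) - complex_of_real ((norm w')^2)
        + \<i> * complex_of_real ((norm p)^2) - \<i> * complex_of_real ((norm q)^2) = 4 * cnj g"
    unfolding nw nw' np nq by (simp add: complex_eq_iff)
  finally show ?thesis by (simp add: g_def)
qed

lemma core:
  assumes n1: "norm x1 = 1" and n2: "norm x2 = 1" and n3: "norm x3 = 1" and h: "S x1 x2 x3 = 1"
    and ind: "\<And>c. x2 \<noteq> scaleC c x1"
  shows False
proof -
  have h2: "S x1 x3 x2 = 1" using h sym23 by metis
  have h312: "S x3 x1 x2 = 1" using h sym12 sym23 by metis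
  have h321: "S x3 x2 x1 = 1" using h sym12 sym23 by metis
  have c11: "cinner x1 x1 = 1" using n1 by (simp add: cinner_self)
  have c33: "cinner x3 x3 = 1" using n3 by (simp add: cinner_self)
  define \<alpha> where "\<alpha> = cnj (cinner x3 x1)"
  define \<beta> where "\<beta> = cnj (cinner x3 x2)"
  have "cinner (scaleC (cnj \<alpha>) x2) v = cinner (scaleC (cnj \<beta>) x1) v" for v
    using C[OF n3 n1 n2 h312, of v] C[OF n3 n2 n1 h321, of v]
    by (simp add: cinner_scaleC_left \<alpha>_def \<beta>_def)
  hence E: "scaleC (cnj \<alpha>) x2 = scaleC (cnj \<beta>) x1" by (rule cinner_eq_zero_vec)
  have a0: "\<alpha> = 0"
  proof (rule ccontr)
    assume "\<alpha> \<noteq> 0"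
    hence "x2 = scaleC (1 / cnj \<alpha>) (scaleC (cnj \<alpha>) x2)" by (simp add: scaleC_scaleC)
    also have "\<dots> = scaleC (cnj \<beta> / cnj \<alpha>) x1" unfolding E by (simp add: scaleC_scaleC)
    finally show False using ind by blast
  qed
  have b0: "\<beta> = 0" using E a0 n1 by (auto simp: scaleC_eq_0_iff)
  have o31: "cinner x3 x1 = 0" using a0 by (simp add: \<alpha>_def)
  have o13: "cinner x1 x3 = 0" using o31 cinner_conj_commute[of x1 x3] by simp
  have o32: "cinner x3 x2 = 0" using b0 by (simp add: \<beta>_def)
  have o23: "cinner x2 x3 = 0" using o32 cinner_conj_commute[of x2 x3] by simp
  have "cnj (cinner x1 x2) = 0"
    using C[OF n1 n2 n3 h, of x3] C[OF n1 n3 n2 h2, of x3] o13 c33 by simp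
  hence o12: "cinner x1 x2 = 0" by simp
  have o21: "cinner x2 x1 = 0" using o12 cinner_conj_commute[of x2 x1] by simp
  define w where "w = x2 + x3"
  have c22: "cinner x2 x2 = 1" using n2 by (simp add: cinner_self)
  have cww: "cinner w w = 2"
    unfolding w_def cinner_add_left cinner_add_right o23 o32 c22 c33 by simp
  have nw: "norm w = sqrt 2" using cww norm_eq_sqrt_cinner[of w] by simp
  define r where "r = 1 / sqrt 2"
  define z where "z = scaleC (complex_of_real r) w"
  have nz: "norm z = 1" unfolding z_def norm_scaleC nw norm_of_real r_def by simp
  have czz: "cinner z z = 1" using nz by (simp add: cinner_self)
  have F12: "S x1 x2 v = cinner x3 v" for v using Fl[OF n1 n2 n3 h] .
  have F13: "S x1 x3 v = cinner x2 v" for v using Fl[OF n1 n3 n2 h2] .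
  have Sz: "S x1 z v = cinner z v" for v
    by (simp add: z_def scl2 w_def add2 F12 F13 cinner_scaleC_left cinner_add_left algebra_simps)
  have hz: "S z z x1 = 1" using Sz[of z] czz sym12 sym23 by metis
  have hz2: "S z x1 z = 1" using hz sym23 by metis
  have nzx: "cinner z x1 = 0"
    by (simp add: z_def w_def cinner_scaleC_left cinner_add_left o21 o31)
  have "S z z x1 = cnj (cinner z x1) * cinner z x1" using C[OF nz n1 nz hz2, of x1] .
  hence "S z z x1 = 0" using nzx by simp
  thus False using hz by simp
qed

end


lemma ml_scale:
  fixes sc :: "'f::real_normed_field \<Rightarrow> 'a::real_normed_vector \<Rightarrow> 'a"
  assumes ml: "multilinear_form sc k T" and sc: "\<And>r u. sc (of_real r) u = r *\<^sub>R u" and i: "i < k"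
  shows "T (w(i := r *\<^sub>R u)) = of_real r * T (w(i := u))"
proof -
  have "T (w(i := sc (of_real r) u + sc (of_real 0) u)) = of_real r * T (w(i := u)) + of_real 0 * T (w(i := u))"
    using ml i unfolding multilinear_form_def by blast
  moreover have "sc 0 u = 0" using sc[of 0 u] by simp
  ultimately show ?thesis by (simp add: sc)
qed

lemma ml_bound:
  fixes sc :: "'f::real_normed_field \<Rightarrow> 'a::real_normed_vector \<Rightarrow> 'a"
  assumes ml: "multilinear_form sc k T" and sc: "\<And>r u. sc (of_real r) u = r *\<^sub>R u"
    and ub: "\<And>w. (\<forall>i<k. norm (w i) \<le> 1) \<Longrightarrow> norm (T w) \<le> 1"
  shows "norm (T w) \<le> (\<Prod>i<k. norm (w i))"
proof -
  have "\<forall>w. (\<forall>i. m \<le> i \<and> i < k \<longrightarrow> norm (w i) \<le> 1) \<longrightarrow> norm (T w) \<le> (\<Prod>i<m. norm (w i))"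
    if "m \<le> k" for m
    using that
  proof (induction m)
    case 0 thus ?case using ub by auto
  next
    case (Suc m)
    show ?case
    proof (intro allI impI)
      fix w :: "nat \<Rightarrow> 'a" assume hw: "\<forall>i. Suc m \<le> i \<and> i < k \<longrightarrow> norm (w i) \<le> 1"
      have mk: "m < k" using Suc.prems by simp
      show "norm (T w) \<le> (\<Prod>i<Suc m. norm (w i))"
      proof (cases "w m = 0")
        case True
        have "T w = T (w(m := 0 *\<^sub>R 0))" using True by (metis fun_upd_triv scale_zero_left)
        also have "\<dots> = 0" using ml_scale[OF ml sc mk, of w 0 0] by simp
        finally show ?thesis by (simp add: prod_nonneg)
      next
        case False
        define n where "n = norm (w m)"
        have np: "n > 0" using False by (simp add: n_def)
        define w' where "w' = w(m := (1/n) *\<^sub>R w m)"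
        have hw': "\<forall>i. m \<le> i \<and> i < k \<longrightarrow> norm (w' i) \<le> 1"
        proof (intro allI impI)
          fix i assume i: "m \<le> i \<and> i < k"
          show "norm (w' i) \<le> 1"
          proof (cases "i = m")
            case True thus ?thesis using np by (simp add: w'_def n_def)
          next
            case False thus ?thesis using hw i by (simp add: w'_def)
          qed
        qed
        have IH: "norm (T w') \<le> (\<Prod>i<m. norm (w' i))" using Suc.IH mk hw' by auto
        have pe: "(\<Prod>i<m. norm (w' i)) = (\<Prod>i<m. norm (w i))"
          by (rule prod.cong) (auto simp: w'_def)
        have "w = w'(m := n *\<^sub>R ((1/n) *\<^sub>R w m))" using np by (simp add: w'_def)
        hence "T w = of_real n * T (w'(m := (1/n) *\<^sub>R w m))"
          using ml_scale[OF ml sc mk, of w' n "(1/n) *\<^sub>R w m"] by simp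
        also have "w'(m := (1/n) *\<^sub>R w m) = w'" by (simp add: w'_def)
        finally have "norm (T w) = n * norm (T w')" using np by (simp add: norm_mult)
        also have "\<dots> \<le> n * (\<Prod>i<m. norm (w i))" using IH pe np by simp
        also have "\<dots> = (\<Prod>i<Suc m. norm (w i))" by (simp add: n_def mult.commute)
        finally show ?thesis .
      qed
    qed
  qed
  from this[of k] show ?thesis by auto
qed

lemma set_bound:
  fixes T :: "(nat \<Rightarrow> 'a::real_normed_vector) \<Rightarrow> 'f::real_normed_field"
  assumes "bounded_form k T" "form_norm k T = 1" "\<forall>i<k. norm (w i) \<le> 1"
  shows "norm (T w) \<le> 1"
proof -
  have "norm (T w) \<le> form_norm k T"
    unfolding form_norm_def
    by (rule cSup_upper) (use assms in \<open>auto simp: bounded_form_def\<close>)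
  thus ?thesis using assms by simp
qed

lemma mk_member:
  fixes T :: "(nat \<Rightarrow> 'a::real_normed_vector) \<Rightarrow> 'f::real_normed_field"
  assumes ub: "\<And>w. (\<forall>i<k. norm (w i) \<le> 1) \<Longrightarrow> norm (T w) \<le> 1"
    and w0: "\<forall>i<k. norm (wz i) \<le> 1" "norm (T wz) = 1"
  shows "bounded_form k T" "form_norm k T = 1"
proof -
  show "bounded_form k T" unfolding bounded_form_def bdd_above_def using ub by blast
  show "form_norm k T = 1" unfolding form_norm_def
    by (rule cSup_eq_maximum) (use ub w0 in auto)
qed

lemma pi_s_eq1:
  fixes sc :: "'f::real_normed_field \<Rightarrow> 'a::real_normed_vector \<Rightarrow> 'a"
  assumes T: "multilinear_form sc k T" "symmetric_form k T" "bounded_form k T" "form_norm k T = 1"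
    and Tx: "norm (T x) = 1" and x: "\<forall>i<k. norm (x i) = 1"
  shows "pi_s sc k x = 1"
  unfolding pi_s_def
proof (rule cSup_eq_maximum)
  show "1 \<in> {norm (T x) |T. multilinear_form sc k T \<and> symmetric_form k T \<and> bounded_form k T \<and> form_norm k T = 1}"
    using T Tx by (intro CollectI exI[of _ T]) simp
  fix a assume "a \<in> {norm (T x) |T. multilinear_form sc k T \<and> symmetric_form k T \<and> bounded_form k T \<and> form_norm k T = 1}"
  then obtain T' :: "(nat \<Rightarrow> 'a) \<Rightarrow> 'f" where "a = norm (T' x)" "bounded_form k T'" "form_norm k T' = 1"
    by (elim CollectE exE conjE) fast
  thus "a \<le> 1" using set_bound[of k T' x] x by simp
qed

lemma cont_eval: "continuous_on S (\<lambda>T::'b \<Rightarrow> 'c::topological_space. T w)"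
  by (rule continuous_on_subset[OF continuous_on_product_coordinates]) simp

lemma attain:
  fixes sc :: "'f::{real_normed_field,heine_borel} \<Rightarrow> 'a::real_normed_vector \<Rightarrow> 'a" and x :: "nat \<Rightarrow> 'a"
  assumes sc: "\<And>r u. sc (of_real r) u = r *\<^sub>R u"
    and ne: "multilinear_form sc k T0" "symmetric_form k T0" "bounded_form k T0" "form_norm k T0 = 1"
    and pi: "pi_s sc k x = 1" and x: "\<forall>i<k. norm (x i) = 1"
  shows "\<exists>T. multilinear_form sc k T \<and> symmetric_form k T \<and> (\<forall>w. norm (T w) \<le> (\<Prod>i<k. norm (w i))) \<and> T x = 1"
proof -
  define K :: "((nat \<Rightarrow> 'a) \<Rightarrow> 'f) set" where
    "K = {T. multilinear_form sc k T \<and> symmetric_form k T \<and> (\<forall>w. norm (T w) \<le> (\<Prod>i<k. norm (w i)))}"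
  define P :: "((nat \<Rightarrow> 'a) \<Rightarrow> 'f) set" where "P = PiE UNIV (\<lambda>w. cball 0 (\<Prod>i<k. norm (w i)))"
  have cP: "compact P"
  proof -
    have "compactin (product_topology (\<lambda>_. euclidean) UNIV) P"
      unfolding P_def compactin_PiE by simp
    thus ?thesis by (simp add: euclidean_product_topology)
  qed
  have KP: "K \<subseteq> P" by (auto simp: K_def P_def)
  have cK: "closed K"
    unfolding K_def multilinear_form_def symmetric_form_def
    by (intro closed_Collect_conj closed_Collect_all closed_Collect_imp closed_Collect_eq closed_Collect_le
          open_Collect_const continuous_intros cont_eval)
  have compK: "compact K"
  proof -
    have "compact (P \<inter> K)" by (rule compact_Int_closed[OF cP cK])
    moreover have "P \<inter> K = K" using KP by blast
    ultimately show ?thesis by simp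
  qed
  have inK: "T \<in> K" if "multilinear_form sc k T" "symmetric_form k T" "bounded_form k T" "form_norm k T = 1"
    for T :: "(nat \<Rightarrow> 'a) \<Rightarrow> 'f"
    unfolding K_def using that ml_bound[OF that(1) sc] set_bound[OF that(3,4)] by blast
  have T0K: "T0 \<in> K" by (rule inK[OF ne])
  have cn: "continuous_on K (\<lambda>T. norm (T x))" by (intro continuous_intros cont_eval)
  obtain Tm where TmK: "Tm \<in> K" and mx: "\<And>T. T \<in> K \<Longrightarrow> norm (T x) \<le> norm (Tm x)"
    using continuous_attains_sup[OF compK _ cn] T0K by blast
  have "pi_s sc k x \<le> norm (Tm x)"
    unfolding pi_s_def
  proof (rule cSup_least)
    show "{norm (T x) |T. multilinear_form sc k T \<and> symmetric_form k T \<and> bounded_form k T \<and> form_norm k T = 1} \<noteq> {}"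
      using ne by blast
    fix a assume "a \<in> {norm (T x) |T. multilinear_form sc k T \<and> symmetric_form k T \<and> bounded_form k T \<and> form_norm k T = 1}"
    then obtain T :: "(nat \<Rightarrow> 'a) \<Rightarrow> 'f" where "a = norm (T x)" "multilinear_form sc k T"
      "symmetric_form k T" "bounded_form k T" "form_norm k T = 1"
      by (elim CollectE exE conjE) fast
    thus "a \<le> norm (Tm x)" using mx inK by blast
  qed
  hence ge: "norm (Tm x) \<ge> 1" using pi by simp
  have "norm (Tm x) \<le> (\<Prod>i<k. norm (x i))" using TmK by (simp add: K_def)
  also have "\<dots> = 1" using x by simp
  finally have nTm: "norm (Tm x) = 1" using ge by simp
  hence nz: "Tm x \<noteq> 0" by auto
  define T1 where "T1 = (\<lambda>w. inverse (Tm x) * Tm w)"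
  have ml1: "multilinear_form sc k T1"
    using TmK unfolding K_def multilinear_form_def T1_def by (simp add: algebra_simps)
  have sy1: "symmetric_form k T1"
    using TmK unfolding K_def symmetric_form_def T1_def by simp
  have b1: "\<forall>w. norm (T1 w) \<le> (\<Prod>i<k. norm (w i))"
    using TmK nTm unfolding K_def T1_def by (simp add: norm_mult norm_inverse)
  have "T1 x = 1" using nz by (simp add: T1_def)
  thus ?thesis using ml1 sy1 b1 by blast
qed

lemma slice:
  fixes sc :: "'f::real_normed_field \<Rightarrow> 'a::real_normed_vector \<Rightarrow> 'a"
  assumes ml: "multilinear_form sc k T" and sy: "symmetric_form k T"
    and bd: "\<forall>w. norm (T w) \<le> (\<Prod>i<k. norm (w i))"
    and sc: "\<And>r u. sc (of_real r) u = r *\<^sub>R u"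
    and ijl: "i < k" "j < k" "l < k" "i \<noteq> j" "i \<noteq> l" "j \<noteq> l"
    and x: "\<forall>m<k. norm (x m) = 1"
  shows "T (x(i := a, j := b, l := u + v)) = T (x(i := a, j := b, l := u)) + T (x(i := a, j := b, l := v))"
    and "T (x(i := a, j := b, l := sc r u)) = r * T (x(i := a, j := b, l := u))"
    and "T (x(i := a, j := b, l := c)) = T (x(i := b, j := a, l := c))"
    and "T (x(i := a, j := b, l := c)) = T (x(i := a, j := c, l := b))"
    and "norm (T (x(i := a, j := b, l := c))) \<le> norm a * norm b * norm c"
    and "T (x(i := x i, j := x j, l := x l)) = T x"
proof -
  have lin: "T ((x(i := a, j := b))(l := sc \<alpha> u + sc \<beta> v)) =
      \<alpha> * T ((x(i := a, j := b))(l := u)) + \<beta> * T ((x(i := a, j := b))(l := v))" for \<alpha> \<beta> u v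
    using ml ijl unfolding multilinear_form_def by blast
  have s1: "sc 1 u = u" for u using sc[of 1 u] by simp
  have s0: "sc 0 u = 0" for u using sc[of 0 u] by simp
  show "T (x(i := a, j := b, l := u + v)) = T (x(i := a, j := b, l := u)) + T (x(i := a, j := b, l := v))"
    using lin[of 1 u 1 v] by (simp add: s1)
  show "T (x(i := a, j := b, l := sc r u)) = r * T (x(i := a, j := b, l := u))"
    using lin[of r u 0 u] by (simp add: s0)
  have sym: "T (w \<circ> p) = T w" if "p permutes {..<k}" for p w
    using sy that unfolding symmetric_form_def by blast
  have "x(i := b, j := a, l := c) \<circ> Transposition.transpose i j = x(i := a, j := b, l := c)"
    using ijl by (auto simp: fun_eq_iff Transposition.transpose_def)
  moreover have "Transposition.transpose i j permutes {..<k}" using ijl by (intro permutes_swap_id) auto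
  ultimately show "T (x(i := a, j := b, l := c)) = T (x(i := b, j := a, l := c))"
    using sym by metis
  have "x(i := a, j := c, l := b) \<circ> Transposition.transpose j l = x(i := a, j := b, l := c)"
    using ijl by (auto simp: fun_eq_iff Transposition.transpose_def)
  moreover have "Transposition.transpose j l permutes {..<k}" using ijl by (intro permutes_swap_id) auto
  ultimately show "T (x(i := a, j := b, l := c)) = T (x(i := a, j := c, l := b))"
    using sym by metis
  define f where "f = (\<lambda>m. norm ((x(i := a, j := b, l := c)) m))"
  have "{..<k} = {i, j, l} \<union> ({..<k} - {i, j, l})" using ijl by auto
  hence "(\<Prod>m<k. f m) = prod f {i, j, l} * prod f ({..<k} - {i, j, l})"
    by (metis Diff_disjoint finite_Diff finite_insert finite_lessThan prod.union_disjoint finite.emptyI)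
  also have "prod f ({..<k} - {i, j, l}) = 1"
    by (rule prod.neutral) (use x in \<open>auto simp: f_def\<close>)
  also have "prod f {i, j, l} = norm a * norm b * norm c"
    using ijl by (simp add: f_def)
  finally have "(\<Prod>m<k. f m) = norm a * norm b * norm c" by simp
  thus "norm (T (x(i := a, j := b, l := c))) \<le> norm a * norm b * norm c"
    using bd unfolding f_def by metis
  show "T (x(i := x i, j := x j, l := x l)) = T x" by simp
qed


lemma prod_upd:
  fixes k :: nat
  assumes "i < k"
  shows "(\<Prod>m<k. g ((w(i := z)) m)) = g z * (\<Prod>m\<in>{..<k} - {i}. g (w m))"
proof -
  have "(\<Prod>m<k. g ((w(i := z)) m)) = g ((w(i := z)) i) * (\<Prod>m\<in>{..<k} - {i}. g ((w(i := z)) m))"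
    using assms by (subst prod.remove[of "{..<k}" i]) auto
  also have "(\<Prod>m\<in>{..<k} - {i}. g ((w(i := z)) m)) = (\<Prod>m\<in>{..<k} - {i}. g (w m))"
    by (rule prod.cong) auto
  finally show ?thesis by simp
qed

lemma prod_perm:
  fixes k :: nat
  assumes "p permutes {..<k}"
  shows "(\<Prod>m<k. g ((w \<circ> p) m)) = (\<Prod>m<k. g (w m))"
  using prod.permute[OF assms, of "\<lambda>m. g (w m)"] by (simp add: comp_def)

section \<open>Complex witness\<close>

lemma cwit:
  fixes b :: "'a::complex_hilbert" and k :: nat
  assumes nb: "norm b = 1"
  defines "T \<equiv> (\<lambda>w. \<Prod>m<k. cinner b (w m))"
  shows "multilinear_form scaleC k T" "symmetric_form k T" "bounded_form k T" "form_norm k T = 1"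
    and "\<And>w. norm (T w) = (\<Prod>m<k. cmod (cinner b (w m)))"
proof -
  show nT: "norm (T w) = (\<Prod>m<k. cmod (cinner b (w m)))" for w
    by (simp add: T_def prod_norm)
  show "multilinear_form scaleC k T"
    unfolding multilinear_form_def
  proof (intro conjI allI impI)
    fix w w' :: "nat \<Rightarrow> 'a" assume "\<forall>i<k. w i = w' i"
    thus "T w = T w'" unfolding T_def by (intro prod.cong) auto
  next
    fix i w u v a c assume i: "i < k"
    show "T (w(i := scaleC a u + scaleC c v)) = a * T (w(i := u)) + c * T (w(i := v))"
      unfolding T_def prod_upd[OF i]
      by (simp add: cinner_add_right cinner_scaleC_right algebra_simps)
  qed
  show "symmetric_form k T"
    unfolding symmetric_form_def T_def using prod_perm by blast
  have ub: "norm (T w) \<le> 1" if "\<forall>i<k. norm (w i) \<le> 1" for w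
  proof -
    have "norm (T w) \<le> (\<Prod>m<k. (1::real))"
      unfolding nT
    proof (rule prod_mono)
      fix m assume "m \<in> {..<k}"
      thus "0 \<le> cmod (cinner b (w m)) \<and> cmod (cinner b (w m)) \<le> 1"
        using cauchy_schwarz_c[of b "w m"] nb that by (simp add: order_trans)
    qed
    thus ?thesis by simp
  qed
  have cbb: "cinner b b = 1" using nb by (simp add: cinner_self)
  have w0: "\<forall>i<k. norm ((\<lambda>_. b) i) \<le> 1" "norm (T (\<lambda>_. b)) = 1"
    using nb by (simp_all add: T_def cbb)
  show "bounded_form k T" "form_norm k T = 1"
    using mk_member[where k=k and T=T and wz="\<lambda>_. b", OF ub w0] by blast+
qed

section \<open>Real witness\<close>

definition phi :: "'a::real_inner \<Rightarrow> 'a \<Rightarrow> 'a \<Rightarrow> complex" where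
  "phi e1 e2 w = Complex (inner e1 w) (inner e2 w)"

lemma phi_lin: "phi e1 e2 (a *\<^sub>R u + b *\<^sub>R v) = complex_of_real a * phi e1 e2 u + complex_of_real b * phi e1 e2 v"
  by (simp add: phi_def complex_eq_iff inner_add_right)

lemma phi_bound:
  fixes e1 e2 w :: "'a::real_inner"
  assumes e1: "norm e1 = 1" and o: "inner e1 e2 = 0" and e2: "e2 = 0 \<or> norm e2 = 1"
  shows "cmod (phi e1 e2 w) \<le> norm w"
proof -
  define a where "a = inner e1 w"
  define b where "b = inner e2 w"
  have i11: "inner e1 e1 = 1" using e1 by (simp add: dot_square_norm)
  have key: "a^2 + b^2 \<le> (norm w)^2"
  proof (cases "e2 = 0")
    case True
    have "0 \<le> inner (w - a *\<^sub>R e1) (w - a *\<^sub>R e1)" by simp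
    also have "\<dots> = inner w w - a^2"
      by (simp add: inner_diff_left inner_diff_right inner_commute[of w e1] i11 a_def power2_eq_square)
    finally show ?thesis using True by (simp add: b_def dot_square_norm)
  next
    case False
    hence i22: "inner e2 e2 = 1" using e2 by (simp add: dot_square_norm)
    have o2: "inner e2 e1 = 0" using o by (simp add: inner_commute)
    have "0 \<le> inner (w - a *\<^sub>R e1 - b *\<^sub>R e2) (w - a *\<^sub>R e1 - b *\<^sub>R e2)" by simp
    also have "\<dots> = inner w w - a^2 - b^2"
      by (simp add: inner_diff_left inner_diff_right inner_commute[of w e1] inner_commute[of w e2]
          i11 i22 o o2 a_def b_def power2_eq_square algebra_simps)
    finally show ?thesis by (simp add: dot_square_norm)
  qed
  have "cmod (phi e1 e2 w) = sqrt (a^2 + b^2)" by (simp add: phi_def cmod_def a_def b_def)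
  also have "\<dots> \<le> sqrt ((norm w)^2)" using key by (rule real_sqrt_le_mono)
  also have "\<dots> = norm w" by simp
  finally show ?thesis .
qed

lemma phi_span:
  fixes e1 e2 x :: "'a::real_inner"
  assumes e1: "norm e1 = 1" and o: "inner e1 e2 = 0" and e2: "e2 = 0 \<or> norm e2 = 1"
    and x: "x = s *\<^sub>R e1 + t *\<^sub>R e2"
  shows "cmod (phi e1 e2 x) = norm x"
proof -
  have i11: "inner e1 e1 = 1" using e1 by (simp add: dot_square_norm)
  have o2: "inner e2 e1 = 0" using o by (simp add: inner_commute)
  have "(cmod (phi e1 e2 x))^2 = (norm x)^2"
  proof (cases "e2 = 0")
    case True
    thus ?thesis using x e1 by (simp add: phi_def cmod_power2 i11 power_mult_distrib)
  next
    case False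
    hence i22: "inner e2 e2 = 1" using e2 by (simp add: dot_square_norm)
    have a: "(cmod (phi e1 e2 x))^2 = s^2 + t^2"
      by (simp add: phi_def cmod_power2 x inner_add_right i11 i22 o o2)
    have "(norm x)^2 = inner x x" by (simp add: dot_square_norm)
    also have "\<dots> = s^2 + t^2"
      by (simp add: x inner_add_left inner_add_right i11 i22 o o2 power2_eq_square algebra_simps)
    finally show ?thesis using a by simp
  qed
  thus ?thesis by (simp add: power2_eq_iff_nonneg)
qed

lemma rwit:
  fixes e1 e2 :: "'a::real_inner" and k :: nat
  assumes e1: "norm e1 = 1" and o: "inner e1 e2 = 0" and e2: "e2 = 0 \<or> norm e2 = 1"
    and c: "cmod c \<le> 1"
    and w0: "\<forall>i<k. norm (w0 i) \<le> 1" "\<bar>Re (c * (\<Prod>m<k. phi e1 e2 (w0 m)))\<bar> = 1"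
  defines "T \<equiv> (\<lambda>w. Re (c * (\<Prod>m<k. phi e1 e2 (w m))))"
  shows "multilinear_form scaleR k T" "symmetric_form k T" "bounded_form k T" "form_norm k T = 1"
proof -
  show "multilinear_form scaleR k T"
    unfolding multilinear_form_def
  proof (intro conjI allI impI)
    fix w w' :: "nat \<Rightarrow> 'a" assume "\<forall>i<k. w i = w' i"
    thus "T w = T w'" unfolding T_def by (metis (no_types, lifting) lessThan_iff prod.cong)
  next
    fix i w u v and a b :: real assume i: "i < k"
    show "T (w(i := a *\<^sub>R u + b *\<^sub>R v)) = a * T (w(i := u)) + b * T (w(i := v))"
      unfolding T_def prod_upd[OF i] phi_lin
      by (simp add: algebra_simps)
  qed
  show "symmetric_form k T"
    unfolding symmetric_form_def T_def using prod_perm by metis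
  have ub: "norm (T w) \<le> 1" if "\<forall>i<k. norm (w i) \<le> 1" for w
  proof -
    have "norm (T w) \<le> cmod (c * (\<Prod>m<k. phi e1 e2 (w m)))"
      unfolding T_def real_norm_def by (rule abs_Re_le_cmod)
    also have "\<dots> = cmod c * (\<Prod>m<k. cmod (phi e1 e2 (w m)))" by (simp add: norm_mult prod_norm)
    also have "\<dots> \<le> 1 * (\<Prod>m<k. (1::real))"
    proof (rule mult_mono)
      show "(\<Prod>m<k. cmod (phi e1 e2 (w m))) \<le> (\<Prod>m<k. (1::real))"
      proof (rule prod_mono)
        fix m assume "m \<in> {..<k}"
        thus "0 \<le> cmod (phi e1 e2 (w m)) \<and> cmod (phi e1 e2 (w m)) \<le> 1"
          using phi_bound[OF e1 o e2, of "w m"] that by (simp add: order_trans)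
      qed
    qed (use c in \<open>auto intro: prod_nonneg\<close>)
    finally show ?thesis by simp
  qed
  have w0': "norm (T w0) = 1" using w0(2) by (simp add: T_def)
  show "bounded_form k T" "form_norm k T = 1"
    using mk_member[where k=k and T=T and wz=w0, OF ub w0(1) w0'] by blast+
qed


lemma three_elems:
  assumes "finite B" "card B \<ge> 3"
  obtains a b c where "a \<in> B" "b \<in> B" "c \<in> B" "a \<noteq> b" "a \<noteq> c" "b \<noteq> c"
proof -
  obtain a where a: "a \<in> B" using assms by fastforce
  have "card (B - {a}) > 0" using assms a by simp
  hence "B - {a} \<noteq> {}" using card_gt_0_iff by blast
  then obtain b where b: "b \<in> B - {a}" by blast
  have "card (B - {a} - {b}) > 0" using assms a b by (simp add: card_Diff_singleton_if)
  hence "B - {a} - {b} \<noteq> {}" using card_gt_0_iff by blast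
  then obtain c where c: "c \<in> B - {a} - {b}" by blast
  show ?thesis using that a b c by blast
qed

lemma two_elems:
  assumes "finite B" "card B \<ge> 2"
  obtains a b where "a \<in> B" "b \<in> B" "a \<noteq> b"
proof -
  obtain a where a: "a \<in> B" using assms by fastforce
  have "card (B - {a}) > 0" using assms a by simp
  hence "B - {a} \<noteq> {}" using card_gt_0_iff by blast
  then obtain b where b: "b \<in> B - {a}" by blast
  show ?thesis using that a b by blast
qed

lemma real_part:
  fixes x :: "nat \<Rightarrow> 'a::{real_inner, complete_space}" and k :: nat
  assumes k: "k \<ge> 3" and x: "\<forall>i<k. norm (x i) = 1"
  shows "pi_s scaleR k x = 1 \<longleftrightarrow> dim (span (x ` {..<k})) \<in> {1, 2}"
proof -
  define X where "X = x ` {..<k}"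
  obtain B where BX: "B \<subseteq> X" and indB: "independent B" and XB: "X \<subseteq> span B"
    using maximal_independent_subset[of X] by blast
  have finB: "finite B" using BX finite_subset unfolding X_def by blast
  have dimB: "dim (span X) = card B"
    using basis_card_eq_dim[OF BX XB indB] by simp
  have k0: "0 < k" using k by simp
  have nB: "B \<noteq> {}"
  proof
    assume "B = {}"
    hence "x 0 \<in> span {}" using XB k0 unfolding X_def by blast
    hence "x 0 = 0" by simp
    thus False using x k0 by force
  qed
  have unitX: "norm v = 1" if "v \<in> X" for v using that x unfolding X_def by auto
  have sc: "\<And>r u. scaleR (of_real r) u = r *\<^sub>R (u::'a)" by simp
  show ?thesis
  proof
    assume pi: "pi_s scaleR k x = 1"
    have x00: "norm (x 0) = 1" using x k0 by simp
    have p0: "phi (x 0) 0 (x 0) = 1" using x00 by (simp add: phi_def complex_eq_iff dot_square_norm)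
    note W = rwit[of "x 0" 0 1 k "\<lambda>_. x 0"]
    have wit: "multilinear_form scaleR k (\<lambda>w. Re (1 * (\<Prod>m<k. phi (x 0) 0 (w m))))"
      "symmetric_form k (\<lambda>w. Re (1 * (\<Prod>m<k. phi (x 0) 0 (w m))))"
      "bounded_form k (\<lambda>w. Re (1 * (\<Prod>m<k. phi (x 0) 0 (w m))))"
      "form_norm k (\<lambda>w. Re (1 * (\<Prod>m<k. phi (x 0) 0 (w m)))) = 1"
      using W x00 p0 by auto
    obtain T where ml: "multilinear_form scaleR k T" and sy: "symmetric_form k T"
      and bd: "\<forall>w. norm (T w) \<le> (\<Prod>i<k. norm (w i))" and Tx: "T x = 1"
      using attain[OF sc wit pi x] by blast
    show "dim (span (x ` {..<k})) \<in> {1, 2}"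
    proof (rule ccontr)
      assume "dim (span (x ` {..<k})) \<notin> {1, 2}"
      moreover have "card B \<ge> 1" using nB finB by (simp add: Suc_le_eq card_gt_0_iff)
      ultimately have c3: "card B \<ge> 3" using dimB unfolding X_def by auto
      obtain a b c where abc: "a \<in> B" "b \<in> B" "c \<in> B" "a \<noteq> b" "a \<noteq> c" "b \<noteq> c"
        by (rule three_elems[OF finB c3])
      obtain i where i: "i < k" "a = x i" using abc BX unfolding X_def by blast
      obtain j where j: "j < k" "b = x j" using abc BX unfolding X_def by blast
      obtain l where l: "l < k" "c = x l" using abc BX unfolding X_def by blast
      have ijl: "i \<noteq> j" "i \<noteq> l" "j \<noteq> l" using abc i j l by auto
      have ind3: "independent {a, b, c}" using indB abc by (intro independent_mono[OF indB]) auto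
      have a_ns: "a \<notin> span {b, c}" using ind3 abc by (simp add: independent_insert)
      have "independent {c, b}" using indB abc by (intro independent_mono[OF indB]) auto
      hence c_ns: "c \<notin> span {b}" using abc by (simp add: independent_insert)
      have bc: "b + c \<noteq> 0"
      proof
        assume h0: "b + c = 0"
        have cb: "c = - b" using h0 add_eq_0_iff by blast
        have "- b \<in> span {b}" by (intro span_neg span_base) (rule singletonI)
        thus False using c_ns unfolding cb by blast
      qed
      define S where "S = (\<lambda>a b c. T (x(i := a, j := b, l := c)))"
      note sl = slice[OF ml sy bd sc i(1) j(1) l(1) ijl x]
      have RT: "rtri S"
      proof
        fix a b u v show "S a b (u + v) = S a b u + S a b v" unfolding S_def by (rule sl(1))
      next
        fix a b r u show "S a b (r *\<^sub>R u) = r * S a b u" unfolding S_def using sl(2)[of a b r u] by simp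
      next
        fix a b c show "S a b c = S b a c" unfolding S_def by (rule sl(3))
      next
        fix a b c show "S a b c = S a c b" unfolding S_def by (rule sl(4))
      next
        fix a b c show "\<bar>S a b c\<bar> \<le> norm a * norm b * norm c" unfolding S_def using sl(5)[of a b c] by simp
      qed
      have h: "S a b c = 1" unfolding S_def i(2) j(2) l(2) sl(6) by (rule Tx)
      have na: "norm a = 1" and nb: "norm b = 1" and nc: "norm c = 1" using unitX abc BX by auto
      show False by (rule rtri.core[OF RT na nb nc h a_ns abc(6) bc])
    qed
  next
    assume "dim (span (x ` {..<k})) \<in> {1, 2}"
    hence cB: "card B = 1 \<or> card B = 2" using dimB unfolding X_def by auto
    obtain e1 e2 :: 'a where e1: "norm e1 = 1" and o: "inner e1 e2 = 0" and e2: "e2 = 0 \<or> norm e2 = 1"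
      and rep: "\<forall>i<k. \<exists>s t. x i = s *\<^sub>R e1 + t *\<^sub>R e2"
    proof (cases "card B = 1")
      case True
      then obtain a where Ba: "B = {a}" by (auto simp: card_1_singleton_iff)
      have na: "norm a = 1" using Ba BX unitX by auto
      have "\<exists>s t. x i = s *\<^sub>R a + t *\<^sub>R (0::'a)" if "i < k" for i
      proof -
        have "x i \<in> span {a}" using XB Ba that unfolding X_def by blast
        then obtain s where "x i = s *\<^sub>R a" by (auto simp: span_singleton)
        thus ?thesis by auto
      qed
      thus ?thesis using that[of a 0] na by auto
    next
      case False
      hence "card B = 2" using cB by simp
      then obtain a b where Bab: "B = {a, b}" and ab: "a \<noteq> b" by (auto simp: card_2_iff)
      have na: "norm a = 1" using Bab BX unitX by auto
      have "independent (insert b {a})" using indB Bab by (simp add: insert_commute)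
      hence b_ns: "b \<notin> span {a}" using ab by (simp add: independent_insert)
      define v where "v = b - inner a b *\<^sub>R a"
      have v0: "v \<noteq> 0"
      proof
        assume "v = 0"
        hence "b = inner a b *\<^sub>R a" by (simp add: v_def)
        moreover have "inner a b *\<^sub>R a \<in> span {a}" by (intro span_mul span_base) simp
        ultimately have "b \<in> span {a}" by simp
        thus False using b_ns by blast
      qed
      define e2 where "e2 = (1 / norm v) *\<^sub>R v"
      have ne2: "norm e2 = 1" using v0 by (simp add: e2_def)
      have iaa: "inner a a = 1" using na by (simp add: dot_square_norm)
      have o: "inner a e2 = 0" by (simp add: e2_def v_def inner_diff_right iaa)
      have bexp: "b = inner a b *\<^sub>R a + norm v *\<^sub>R e2" using v0 by (simp add: e2_def v_def)
      have "\<exists>s t. x i = s *\<^sub>R a + t *\<^sub>R e2" if "i < k" for i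
      proof -
        have "x i \<in> span (insert a {b})" using XB Bab that unfolding X_def by blast
        then obtain p where "x i - p *\<^sub>R a \<in> span {b}" by (auto simp: span_insert)
        then obtain q where "x i - p *\<^sub>R a = q *\<^sub>R b" by (auto simp: span_singleton)
        hence "x i = p *\<^sub>R a + q *\<^sub>R b" by (simp add: algebra_simps)
        also have "\<dots> = (p + q * inner a b) *\<^sub>R a + (q * norm v) *\<^sub>R e2"
          by (subst bexp) (simp add: algebra_simps)
        finally show ?thesis by blast
      qed
      thus ?thesis using that[of a e2] na o ne2 by auto
    qed
    define P where "P = (\<Prod>m<k. phi e1 e2 (x m))"
    have cP: "cmod P = 1"
    proof -
      have "cmod P = (\<Prod>m<k. cmod (phi e1 e2 (x m)))" by (simp add: P_def prod_norm)
      also have "\<dots> = (\<Prod>m<k. (1::real))"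
      proof (rule prod.cong)
        fix m assume "m \<in> {..<k}"
        then obtain s t where "x m = s *\<^sub>R e1 + t *\<^sub>R e2" using rep by auto
        thus "cmod (phi e1 e2 (x m)) = 1" using phi_span[OF e1 o e2] x \<open>m \<in> {..<k}\<close> by auto
      qed simp
      finally show ?thesis by simp
    qed
    have ReP: "Re (cnj P * P) = 1"
      using cP by (simp add: complex_norm_square[symmetric] mult.commute)
    have cc: "cmod (cnj P) \<le> 1" using cP by simp
    have wx: "\<forall>i<k. norm (x i) \<le> 1" using x by simp
    have wv: "\<bar>Re (cnj P * (\<Prod>m<k. phi e1 e2 (x m)))\<bar> = 1" using ReP by (simp add: P_def)
    note W = rwit[OF e1 o e2 cc wx wv]
    show "pi_s scaleR k x = 1"
      by (rule pi_s_eq1[OF W]) (use wv x in auto)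
  qed
qed

lemma cplx_part:
  fixes y :: "nat \<Rightarrow> 'b::complex_hilbert" and k :: nat
  assumes k: "k \<ge> 3" and y: "\<forall>i<k. norm (y i) = 1"
  shows "pi_s scaleC k y = 1 \<longleftrightarrow> vector_space.dim scaleC (module.span scaleC (y ` {..<k})) = 1"
proof -
  define X where "X = y ` {..<k}"
  obtain B where BX: "B \<subseteq> X" and indB: "cm.independent B" and XB: "X \<subseteq> cm.span B"
    using cvs.maximal_independent_subset[of X] by blast
  have finB: "finite B" using BX finite_subset unfolding X_def by blast
  have dimB: "cvs.dim (cm.span X) = card B"
    using cvs.basis_card_eq_dim[OF BX XB indB] by simp
  have k0: "0 < k" using k by simp
  have nB: "B \<noteq> {}"
  proof
    assume "B = {}"
    hence "y 0 \<in> cm.span {}" using XB k0 unfolding X_def by blast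
    hence "y 0 = 0" by simp
    thus False using y k0 by force
  qed
  have unitX: "norm v = 1" if "v \<in> X" for v using that y unfolding X_def by auto
  have sc: "\<And>r u. scaleC (of_real r) u = r *\<^sub>R (u::'b)" by (rule scaleC_of_real)
  show ?thesis
  proof
    assume pi: "pi_s scaleC k y = 1"
    have y00: "norm (y 0) = 1" using y k0 by simp
    note W = cwit[where k=k, OF y00]
    obtain T where ml: "multilinear_form scaleC k T" and sy: "symmetric_form k T"
      and bd: "\<forall>w. norm (T w) \<le> (\<Prod>i<k. norm (w i))" and Tx: "T y = 1"
      using attain[OF sc W(1-4) pi y] by blast
    show "vector_space.dim scaleC (module.span scaleC (y ` {..<k})) = 1"
    proof (rule ccontr)
      assume "vector_space.dim scaleC (module.span scaleC (y ` {..<k})) \<noteq> 1"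
      moreover have "card B \<ge> 1" using nB finB by (simp add: Suc_le_eq card_gt_0_iff)
      ultimately have c2: "card B \<ge> 2" using dimB unfolding X_def by auto
      obtain a b where ab: "a \<in> B" "b \<in> B" "a \<noteq> b"
        by (rule two_elems[OF finB c2])
      obtain i where i: "i < k" "a = y i" using ab BX unfolding X_def by blast
      obtain j where j: "j < k" "b = y j" using ab BX unfolding X_def by blast
      have ij: "i \<noteq> j" using ab i j by auto
      obtain l where lk: "l < k" and lij: "l \<noteq> i" "l \<noteq> j"
      proof -
        have "(0 \<noteq> i \<and> 0 \<noteq> j) \<or> (1 \<noteq> i \<and> 1 \<noteq> j) \<or> (2 \<noteq> i \<and> (2::nat) \<noteq> j)"
          using ij by arith
        thus ?thesis
        proof (elim disjE conjE)
          assume "0 \<noteq> i" "0 \<noteq> j" thus ?thesis using that[of 0] k by simp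
        next
          assume "1 \<noteq> i" "1 \<noteq> j" thus ?thesis using that[of 1] k by simp
        next
          assume "2 \<noteq> i" "2 \<noteq> j" thus ?thesis using that[of 2] k by simp
        qed
      qed
      have ijl: "i \<noteq> j" "i \<noteq> l" "j \<noteq> l" using lij ij by auto
      have "cm.independent {b, a}" using ab by (intro cm.independent_mono[OF indB]) auto
      hence b_ns: "b \<notin> cm.span {a}" using ab by (simp add: cvs.independent_insert)
      have ind: "\<And>c. b \<noteq> scaleC c a"
      proof
        fix c assume hb: "b = scaleC c a"
        have "scaleC c a \<in> cm.span {a}" by (intro cm.span_scale cm.span_base) (rule singletonI)
        thus False using b_ns unfolding hb by blast
      qed
      define S where "S = (\<lambda>a b c. T (y(i := a, j := b, l := c)))"
      note sl = slice[OF ml sy bd sc i(1) j(1) lk ijl y]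
      have CT: "ctri S"
      proof
        fix a b u v show "S a b (u + v) = S a b u + S a b v" unfolding S_def by (rule sl(1))
      next
        fix a b r u show "S a b (scaleC r u) = r * S a b u" unfolding S_def by (rule sl(2))
      next
        fix a b c show "S a b c = S b a c" unfolding S_def by (rule sl(3))
      next
        fix a b c show "S a b c = S a c b" unfolding S_def by (rule sl(4))
      next
        fix a b c show "cmod (S a b c) \<le> norm a * norm b * norm c" unfolding S_def by (rule sl(5))
      qed
      have h: "S a b (y l) = 1" unfolding S_def i(2) j(2) sl(6) by (rule Tx)
      have na: "norm a = 1" and nb: "norm b = 1" using unitX ab BX by auto
      have nc: "norm (y l) = 1" using y lk by simp
      show False by (rule ctri.core[OF CT na nb nc h ind])
    qed
  next
    assume "vector_space.dim scaleC (module.span scaleC (y ` {..<k})) = 1"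
    hence "card B = 1" using dimB unfolding X_def by auto
    then obtain b where Bb: "B = {b}" by (auto simp: card_1_singleton_iff)
    have nb: "norm b = 1" using Bb BX unitX by auto
    have cb: "cinner b b = 1" using nb by (simp add: cinner_self)
    note W = cwit[where k=k, OF nb]
    have "norm ((\<lambda>w. \<Prod>m<k. cinner b (w m)) y) = (\<Prod>m<k. (1::real))"
      unfolding W(5)
    proof (rule prod.cong)
      fix m assume m: "m \<in> {..<k}"
      have "y m \<in> cm.span {b}" using XB Bb m unfolding X_def by blast
      then obtain c where c: "y m = scaleC c b" by (auto simp: cm.span_singleton)
      have "norm (y m) = 1" using y m by simp
      hence "cmod c = 1" unfolding c norm_scaleC nb by simp
      thus "cmod (cinner b (y m)) = 1" by (simp add: c cinner_scaleC_right cb)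
    qed simp
    hence "norm ((\<lambda>w. \<Prod>m<k. cinner b (w m)) y) = 1" by simp
    thus "pi_s scaleC k y = 1" by (rule pi_s_eq1[OF W(1-4) _ y])
  qed
qed


theorem proposition1p3:
  fixes k :: nat
  assumes "k \<ge> 3"
  shows "(\<forall>x :: nat \<Rightarrow> 'a::{real_inner, complete_space}.
            (\<forall>i<k. norm (x i) = 1) \<longrightarrow>
            (pi_s scaleR k x = 1 \<longleftrightarrow> dim (span (x ` {..<k})) \<in> {1, 2}))
       \<and> (\<forall>y :: nat \<Rightarrow> 'b::complex_hilbert.
            (\<forall>i<k. norm (y i) = 1) \<longrightarrow>
            (pi_s scaleC k y = 1 \<longleftrightarrow>
               vector_space.dim scaleC (module.span scaleC (y ` {..<k})) = 1))"
  using real_part[OF assms] cplx_part[OF assms] by blast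

end
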